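(* Let $f\in\mathbb{Q}[x]$ be a univariate numerical polynomial of degree $n$. Then \[ \frac{\gcd\{kf(k)\mid k\in\mathbb{Z}\}}{\gcd\{f(k)\mid k\in\mathbb{Z}\}} \] divides $\operatorname{lcm}\{1,\ldots,n+1\}$.
   Context: A numerical polynomial is a polynomial with rational coefficients taking integer values at all integers. *)

theory Defs
  imports "HOL-Computational_Algebra.Polynomial"
begin

definition numerical_poly :: "rat poly \<Rightarrow> bool" where
  "numerical_poly f \<longleftrightarrow> (\<forall>k::int. poly f (of_int k) \<in> \<int>)"

text \<open>The integer value of f at k (meaningful for numerical polynomials).\<close>
definition int_val :: "rat poly \<Rightarrow> int \<Rightarrow> int" where
  "int_val f k = \<lfloor>poly f (of_int k)\<rfloor>"

end

theory Submission
  imports Defs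
begin

definition fd :: "(int \<Rightarrow> 'a::ab_group_add) \<Rightarrow> int \<Rightarrow> 'a" where
  "fd F = (\<lambda>x. F (x + 1) - F x)"

definition pdiff :: "rat poly \<Rightarrow> rat poly" where
  "pdiff p = pcompose p [:1, 1:] - p"

lemma pdiff_deg0: "degree p = 0 \<Longrightarrow> pdiff p = 0"
  unfolding pdiff_def by (metis degree_eq_zeroE pcompose_const diff_self)

lemma pdiff_deg: assumes "degree p > 0" shows "degree (pdiff p) < degree p"
proof -
  let ?d = "degree p"
  have dq: "degree (pcompose p [:1,1:]) = ?d" by (simp add: degree_pcompose)
  have lc: "coeff (pcompose p [:1,1:]) ?d = coeff p ?d"
    using lead_coeff_comp[of "[:1,1:]" p] dq by simp
  have le: "degree (pdiff p) \<le> ?d" unfolding pdiff_def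
    using degree_diff_le[of "pcompose p [:1,1:]" ?d p] dq by simp
  have c0: "coeff (pdiff p) ?d = 0" unfolding pdiff_def using lc by simp
  show ?thesis
  proof (rule ccontr)
    assume na: "\<not> ?thesis"
    then have "degree (pdiff p) = ?d" using le by simp
    then have "pdiff p = 0" using c0 by (metis leading_coeff_0_iff)
    then show False using na assms by simp
  qed
qed

lemma pdiff_0: "pdiff 0 = 0" by (simp add: pdiff_def)

lemma pdiff_pow_zero: "degree p < j \<Longrightarrow> (pdiff ^^ j) p = 0"
proof (induction j arbitrary: p)
  case 0 then show ?case by simp
next
  case (Suc j)
  have e: "(pdiff ^^ Suc j) p = (pdiff ^^ j) (pdiff p)" by (simp only: funpow_Suc_right comp_def)
  show ?case
  proof (cases "degree p = 0")
    case True
    then have "pdiff p = 0" by (rule pdiff_deg0)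
    then show ?thesis using e Suc.IH[of 0]
      by (cases j) auto
  next
    case False
    then have "degree (pdiff p) < j" using pdiff_deg[of p] Suc.prems by simp
    then show ?thesis using e Suc.IH by simp
  qed
qed

lemma fd_poly: "(fd ^^ j) (\<lambda>k. poly f (of_int k)) = (\<lambda>k. poly ((pdiff ^^ j) f) (of_int k))"
  by (induction j) (simp_all add: fd_def pdiff_def poly_pcompose algebra_simps)

lemma fd_of_int: "(fd ^^ j) (\<lambda>k. (of_int (F k) :: rat)) = (\<lambda>k. of_int ((fd ^^ j) F k))"
  by (induction j) (simp_all add: fd_def)

lemma fd_mult_const: "(fd ^^ j) (\<lambda>k. (c::int) * F k) = (\<lambda>k. c * (fd ^^ j) F k)"
  by (induction j) (simp_all add: fd_def algebra_simps)

lemma fd_zero: "(fd ^^ j) (\<lambda>k. 0::int) = (\<lambda>k. 0)"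
  by (induction j) (simp_all add: fd_def)

lemma fd_leibniz:
  "(fd ^^ Suc j) (\<lambda>x. x * F x) = (\<lambda>x. x * (fd ^^ Suc j) F x + int (Suc j) * (fd ^^ j) F (x + 1))"
proof (induction j)
  case 0 then show ?case by (simp add: fd_def algebra_simps)
next
  case (Suc j)
  have "(fd ^^ Suc (Suc j)) (\<lambda>x. x * F x) = fd ((fd ^^ Suc j) (\<lambda>x. x * F x))" by simp
  also have "\<dots> = fd (\<lambda>x. x * (fd ^^ Suc j) F x + int (Suc j) * (fd ^^ j) F (x + 1))"
    using Suc.IH by simp
  also have "\<dots> = (\<lambda>x. x * (fd ^^ Suc (Suc j)) F x + int (Suc (Suc j)) * (fd ^^ Suc j) F (x + 1))"
    by (simp add: fd_def algebra_simps)
  finally show ?case .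
qed

lemma fd_dvd_all: "(\<forall>k. (m::int) dvd F k) \<Longrightarrow> m dvd (fd ^^ j) F k"
proof (induction j arbitrary: k)
  case 0 then show ?case by simp
next
  case (Suc j) then show ?case by (simp add: fd_def dvd_diff)
qed

lemma fd_recover:
  assumes "\<forall>i. (m::int) dvd (fd ^^ i) F 0" and "(fd ^^ N) F = (\<lambda>k. 0)"
  shows "m dvd F k"
  using assms
proof (induction N arbitrary: F k)
  case 0 then show ?case by simp
next
  case (Suc N)
  have "\<forall>i. m dvd (fd ^^ i) (fd F) 0"
    using Suc.prems(1) by (metis comp_apply funpow_Suc_right)
  moreover have "(fd ^^ N) (fd F) = (\<lambda>k. 0)"
    using Suc.prems(2) by (metis comp_apply funpow_Suc_right)
  ultimately have d: "\<And>k. m dvd fd F k" using Suc.IH by blast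
  have z: "m dvd F 0" using Suc.prems(1)[rule_format, of 0] by simp
  show ?case
  proof (induction k rule: int_induct[where k = 0])
    case base then show ?case using z .
  next
    case (step1 i)
    have "F (i + 1) = F i + fd F i" by (simp add: fd_def)
    then show ?case using step1 d by simp
  next
    case (step2 i)
    have "F (i - 1) = F i - fd F (i - 1)" by (simp add: fd_def)
    then show ?case using step2 d by simp
  qed
qed

theorem lemma3p8:
  fixes f :: "rat poly" and n :: nat
  assumes "numerical_poly f"
    and "f \<noteq> 0"
    and "degree f = n"
  shows "Gcd {k * int_val f k | k. True} div Gcd {int_val f k | k. True}
           dvd Lcm {1..int n + 1}"
proof -
  define F where "F = int_val f"
  define G where "G = Gcd {k * F k | k. True}"
  define g where "g = Gcd {F k | k. True}"
  define L where "L = Lcm {1..int n + 1}"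
  define a where "a i = (fd ^^ i) F 0" for i
  have Fp: "of_int (F k) = poly f (of_int k)" for k
  proof -
    have "poly f (of_int k) \<in> \<int>" using assms(1) unfolding numerical_poly_def by blast
    then show ?thesis unfolding F_def int_val_def by (metis Ints_cases floor_of_int)
  qed
  have Fp': "(\<lambda>k. (of_int (F k) :: rat)) = (\<lambda>k. poly f (of_int k))" using Fp by auto
  have Z: "(fd ^^ i) F = (\<lambda>k. 0)" if "i \<ge> n + 1" for i
  proof
    fix k
    have "(of_int ((fd ^^ i) F k) :: rat) = poly ((pdiff ^^ i) f) (of_int k)"
      using fun_cong[OF fd_of_int[of i F], of k] fd_poly[of i f] Fp' by metis
    also have "\<dots> = 0" using pdiff_pow_zero[of f i] that assms(3) by simp
    finally show "(fd ^^ i) F k = 0" by simp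
  qed
  have az: "a i = 0" if "i > n" for i using Z[of i] that unfolding a_def by simp
  have GH: "G dvd (fd ^^ j) (\<lambda>x. x * F x) k" for j k
    by (rule fd_dvd_all) (auto simp: G_def intro: Gcd_dvd)
  have b: "G dvd int (Suc j) * (a j + a (Suc j))" for j
  proof -
    have "(fd ^^ Suc j) (\<lambda>x. x * F x) 0 = int (Suc j) * (fd ^^ j) F 1"
      using fun_cong[OF fd_leibniz[of j F], of 0] by simp
    moreover have "(fd ^^ j) F 1 = a j + a (Suc j)"
      unfolding a_def by (simp add: fd_def)
    ultimately show ?thesis using GH[of "Suc j" 0] by simp
  qed
  have down: "G dvd Lcm {int (n - m) + 1 .. int n + 1} * a (n - m)" if "m \<le> n" for m
    using that
  proof (induction m)
    case 0
    then show ?case using b[of n] az[of "Suc n"] by (simp add: add.commute)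
  next
    case (Suc m)
    define j where "j = n - Suc m"
    have nm: "n - m = Suc j" using Suc.prems unfolding j_def by simp
    have IH: "G dvd Lcm {int (Suc j) + 1 .. int n + 1} * a (Suc j)"
      using Suc.IH Suc.prems nm by simp
    have set: "{int j + 1 .. int n + 1} = insert (int j + 1) {int (Suc j) + 1 .. int n + 1}"
      using Suc.prems unfolding j_def by auto
    define M where "M = Lcm {int j + 1 .. int n + 1}"
    have M: "M = lcm (int (Suc j)) (Lcm {int (Suc j) + 1 .. int n + 1})"
      unfolding M_def set by (simp add: add.commute)
    have "G dvd M * (a j + a (Suc j))"
      using b[of j] by (metis M dvd_lcm1 dvd_trans mult_dvd_mono dvd_refl)
    moreover have "G dvd M * a (Suc j)"
      using IH by (metis M dvd_lcm2 dvd_trans mult_dvd_mono dvd_refl)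
    ultimately have "G dvd M * a j"
      by (metis add_diff_cancel_right' distrib_left dvd_diff)
    then show ?case unfolding M_def j_def by simp
  qed
  have La: "G dvd L * a i" for i
  proof (cases "i \<le> n")
    case True
    have "G dvd Lcm {int (n - (n - i)) + 1 .. int n + 1} * a (n - (n - i))"
      using down[of "n - i"] by simp
    moreover have "Lcm {int (n - (n - i)) + 1 .. int n + 1} dvd L"
      unfolding L_def by (rule Lcm_subset) auto
    ultimately show ?thesis using True
      by (metis diff_diff_cancel dvd_trans mult_dvd_mono dvd_refl)
  next
    case False then show ?thesis using az[of i] by simp
  qed
  have LF: "G dvd L * F k" for k
  proof -
    have "\<forall>i. G dvd (fd ^^ i) (\<lambda>k. L * F k) 0"
      using La unfolding a_def fd_mult_const by simp
    moreover have "(fd ^^ (n+1)) (\<lambda>k. L * F k) = (\<lambda>k. 0)"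
      unfolding fd_mult_const using Z[of "n+1"] by simp
    ultimately show ?thesis using fd_recover[of G "\<lambda>k. L * F k" "n+1"] by simp
  qed
  have "G dvd Gcd ((*) L ` {F k | k. True})"
    by (rule Gcd_greatest) (auto simp: LF)
  then have GLg: "G dvd L * g" unfolding Gcd_mult g_def by simp
  have gG: "g dvd G" unfolding G_def g_def
    by (rule Gcd_greatest) (force intro: dvd_mult Gcd_dvd)
  have g0: "g \<noteq> 0"
  proof
    assume "g = 0"
    then have "\<forall>k. F k = 0" unfolding g_def by (auto simp: Gcd_0_iff)
    then have "\<forall>k. poly f (of_int k) = 0" using Fp by (metis of_int_0)
    then have "range (of_int :: int \<Rightarrow> rat) \<subseteq> {x. poly f x = 0}" by auto
    moreover have "finite {x. poly f x = 0}" using poly_roots_finite[OF assms(2)] .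
    moreover have "infinite (range (of_int :: int \<Rightarrow> rat))"
      by (metis finite_imageD infinite_UNIV_int inj_onI of_int_eq_iff)
    ultimately show False using finite_subset by blast
  qed
  obtain c where c: "G = g * c" using gG by blast
  have "g * c dvd g * L" using GLg c by (simp add: mult.commute)
  then have "c dvd L" using g0 by simp
  moreover have "G div g = c" using c g0 by simp
  ultimately show ?thesis unfolding G_def g_def L_def F_def by simp
qed

end
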